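(* Let $\mathcal F$ be a filtration array and $E=(E_{m,n})_{m,n\in\mathbb N}$ a nonnegative process adapted to $\mathcal F$. If $E$ is an asymptotic supermartingale (in $L_1$, for $\mathcal F$, uniformly in $\mathcal P$), then $E$ has the asymptotic supermartingale property (in $L_1$, for $\mathcal F$, uniformly in $\mathcal P$).
   Context: $(\Omega,\mathcal A)$ is a measurable space and $\mathcal P$ a set of probability measures on it; $\mathbb N=\{0,1,\dots\}$. A filtration array is a family $(\mathcal F_{m,n})_{m,n\in\mathbb N}$ of sub-$\sigma$-algebras of $\mathcal A$ with $\mathcal F_{m,n}\subset\mathcal F_{m+1,n}\cap\mathcal F_{m,n+1}$; $\mathcal F_{\infty,n}:=\sigma(\bigcup_m\mathcal F_{m,n})$. Adapted means $E_{m,n}$ is $\mathcal F_{m,n}$-measurable. A supermartingale for $\mathcal P$ w.r.t. a filtration $\mathcal G$ is a $\mathcal G$-adapted process $(S_n)$ with each $S_n$ $P$-integrable and $\mathbb E_P[S_{n+1}\mid\mathcal G_n]\le S_n$ $P$-a.s. for all $P\in\mathcal P$, $n\in\mathbb N$. $E$ converges to $S$ in $L_1$ uniformly in $\mathcal P$ if all $E_{m,n},S_n$ are $P$-integrable for all $P\in\mathcal P$ and $\lim_m\sup_{P\in\mathcal P}\mathbb E_P[|E_{m,n}-S_n|]=0$ for every $n$. $E$ is an asymptotic supermartingale if there is a nonnegative supermartingale $S$ for $\mathcal P$ w.r.t. $\mathcal F_{\infty,\bullet}$ such that $E$ converges to $S$ in $L_1$ uniformly in $\mathcal P$. For $P\in\mathcal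 P$ and $m,n\in\mathbb N$ let $\delta_{m,n}=\mathbb E_P[E_{m,n+1}\mid\mathcal F_{m,n}]-E_{m,n}$ if $E_{m,n+1}$ is $P$-integrable and $\delta_{m,n}=\infty$ otherwise (dependence on $P$ suppressed). $E$ has the asymptotic supermartingale property (ASP) if for every $n\in\mathbb N$, $\lim_{m\to\infty}\sup_{P\in\mathcal P}\mathbb E_P[\delta_{m,n}^+]=0$, where $x^+=\max\{x,0\}$. *)

theory Defs
  imports "HOL-Probability.Probability"
begin

text \<open>The measurable space (Omega, A) is represented by a measure M (only its space and
  sigma-algebra are used); the family of probability measures is a set of measures on the
  same sigma-algebra.  Sub-sigma-algebras are represented as measures F with subalgebra M F.\<close>

definition prob_family :: "'a measure \<Rightarrow> 'a measure set \<Rightarrow> bool" where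
  "prob_family M Ps \<longleftrightarrow> (\<forall>P\<in>Ps. prob_space P \<and> sets P = sets M)"

definition filtration_array :: "'a measure \<Rightarrow> (nat \<Rightarrow> nat \<Rightarrow> 'a measure) \<Rightarrow> bool" where
  "filtration_array M F \<longleftrightarrow>
     (\<forall>m n. subalgebra M (F m n)) \<and>
     (\<forall>m n. sets (F m n) \<subseteq> sets (F (Suc m) n) \<inter> sets (F m (Suc n)))"

definition F_infty :: "'a measure \<Rightarrow> (nat \<Rightarrow> nat \<Rightarrow> 'a measure) \<Rightarrow> nat \<Rightarrow> 'a measure" where
  "F_infty M F n = sigma (space M) (\<Union>m. sets (F m n))"

definition adapted_array :: "(nat \<Rightarrow> nat \<Rightarrow> 'a measure) \<Rightarrow> (nat \<Rightarrow> nat \<Rightarrow> 'a \<Rightarrow> real) \<Rightarrow> bool" where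
  "adapted_array F E \<longleftrightarrow> (\<forall>m n. E m n \<in> borel_measurable (F m n))"

definition supermartingale ::
    "'a measure set \<Rightarrow> (nat \<Rightarrow> 'a measure) \<Rightarrow> (nat \<Rightarrow> 'a \<Rightarrow> real) \<Rightarrow> bool" where
  "supermartingale Ps G S \<longleftrightarrow>
     (\<forall>n. S n \<in> borel_measurable (G n)) \<and>
     (\<forall>P\<in>Ps. \<forall>n. integrable P (S n) \<and>
        (AE x in P. real_cond_exp P (G n) (S (Suc n)) x \<le> S n x))"

definition L1_unif_conv ::
    "'a measure set \<Rightarrow> (nat \<Rightarrow> nat \<Rightarrow> 'a \<Rightarrow> real) \<Rightarrow> (nat \<Rightarrow> 'a \<Rightarrow> real) \<Rightarrow> bool" where
  "L1_unif_conv Ps E S \<longleftrightarrow>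
     (\<forall>P\<in>Ps. \<forall>m n. integrable P (E m n) \<and> integrable P (S n)) \<and>
     (\<forall>n. (\<lambda>m. SUP P\<in>Ps. \<integral>\<^sup>+ x. ennreal \<bar>E m n x - S n x\<bar> \<partial>P) \<longlonglongrightarrow> 0)"

definition asymptotic_supermartingale ::
    "'a measure \<Rightarrow> 'a measure set \<Rightarrow> (nat \<Rightarrow> nat \<Rightarrow> 'a measure) \<Rightarrow> (nat \<Rightarrow> nat \<Rightarrow> 'a \<Rightarrow> real) \<Rightarrow> bool" where
  "asymptotic_supermartingale M Ps F E \<longleftrightarrow>
     (\<exists>S. (\<forall>n. \<forall>x\<in>space M. S n x \<ge> 0) \<and> supermartingale Ps (F_infty M F) S \<and>
          L1_unif_conv Ps E S)"

text \<open>E_P[delta_{m,n}^+] as an extended nonnegative real; it is infinity when E_{m,n+1}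
  is not P-integrable (then delta = infinity).\<close>
definition exp_delta_pos ::
    "'a measure \<Rightarrow> (nat \<Rightarrow> nat \<Rightarrow> 'a measure) \<Rightarrow> (nat \<Rightarrow> nat \<Rightarrow> 'a \<Rightarrow> real) \<Rightarrow> nat \<Rightarrow> nat \<Rightarrow> ennreal" where
  "exp_delta_pos P F E m n =
     (if integrable P (E m (Suc n))
      then \<integral>\<^sup>+ x. ennreal (max 0 (real_cond_exp P (F m n) (E m (Suc n)) x - E m n x)) \<partial>P
      else \<infinity>)"

definition ASP ::
    "'a measure set \<Rightarrow> (nat \<Rightarrow> nat \<Rightarrow> 'a measure) \<Rightarrow> (nat \<Rightarrow> nat \<Rightarrow> 'a \<Rightarrow> real) \<Rightarrow> bool" where
  "ASP Ps F E \<longleftrightarrow> (\<forall>n. (\<lambda>m. SUP P\<in>Ps. exp_delta_pos P F E m n) \<longlonglongrightarrow> 0)"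

end

theory Submission
  imports Defs
begin

lemma key_bound:
  assumes P: "prob_space P" and sFm: "subalgebra P Fm" and sG: "subalgebra P G"
    and FG: "sets Fm \<subseteq> sets G"
    and ie0: "integrable P e0" and ie1: "integrable P e1"
    and is0: "integrable P s0" and is1: "integrable P s1"
    and me0: "e0 \<in> borel_measurable Fm"
    and sup: "AE x in P. real_cond_exp P G s1 x \<le> s0 x"
  shows "(\<integral>\<^sup>+ x. ennreal (max 0 (real_cond_exp P Fm e1 x - e0 x)) \<partial>P)
     \<le> (\<integral>\<^sup>+ x. ennreal \<bar>e1 x - s1 x\<bar> \<partial>P) + (\<integral>\<^sup>+ x. ennreal \<bar>e0 x - s0 x\<bar> \<partial>P)"
proof -
  interpret prob_space P by fact
  interpret Fm: finite_measure_subalgebra P Fm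
    by unfold_locales (rule sFm)
  interpret G: finite_measure_subalgebra P G
    by unfold_locales (rule sG)
  have sGF: "subalgebra G Fm" using sFm sG FG unfolding subalgebra_def by auto
  have [measurable]: "e0 \<in> borel_measurable P" "e1 \<in> borel_measurable P"
    "s0 \<in> borel_measurable P" "s1 \<in> borel_measurable P" using ie0 ie1 is0 is1 by auto
  have A1: "AE x in P. real_cond_exp P Fm (\<lambda>x. e1 x - s1 x) x = real_cond_exp P Fm e1 x - real_cond_exp P Fm s1 x"
    using Fm.real_cond_exp_diff[OF ie1 is1] .
  have A2: "AE x in P. real_cond_exp P Fm (real_cond_exp P G s1) x = real_cond_exp P Fm s1 x"
    using Fm.real_cond_exp_nested_subalg[OF sG sGF is1] .
  have A3: "AE x in P. real_cond_exp P Fm (real_cond_exp P G s1) x \<le> real_cond_exp P Fm s0 x"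
    using Fm.real_cond_exp_mono[OF sup G.real_cond_exp_int(1)[OF is1] is0] .
  have A4: "AE x in P. real_cond_exp P Fm (\<lambda>x. s0 x - e0 x) x = real_cond_exp P Fm s0 x - real_cond_exp P Fm e0 x"
    using Fm.real_cond_exp_diff[OF is0 ie0] .
  have A5: "AE x in P. real_cond_exp P Fm e0 x = e0 x"
    using Fm.real_cond_exp_F_meas[OF ie0 me0] .
  have AE: "AE x in P. ennreal (max 0 (real_cond_exp P Fm e1 x - e0 x))
      \<le> ennreal \<bar>real_cond_exp P Fm (\<lambda>x. e1 x - s1 x) x\<bar> + ennreal \<bar>real_cond_exp P Fm (\<lambda>x. s0 x - e0 x) x\<bar>"
  proof (rule AE_mp[OF AE_conjI[OF A1 AE_conjI[OF A2 AE_conjI[OF A3 AE_conjI[OF A4 A5]]]]], rule AE_I2, intro impI)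
    fix x assume h: "real_cond_exp P Fm (\<lambda>x. e1 x - s1 x) x = real_cond_exp P Fm e1 x - real_cond_exp P Fm s1 x \<and>
     real_cond_exp P Fm (real_cond_exp P G s1) x = real_cond_exp P Fm s1 x \<and>
     real_cond_exp P Fm (real_cond_exp P G s1) x \<le> real_cond_exp P Fm s0 x \<and>
     real_cond_exp P Fm (\<lambda>x. s0 x - e0 x) x = real_cond_exp P Fm s0 x - real_cond_exp P Fm e0 x \<and>
     real_cond_exp P Fm e0 x = e0 x"
    have "max 0 (real_cond_exp P Fm e1 x - e0 x) \<le> \<bar>real_cond_exp P Fm (\<lambda>x. e1 x - s1 x) x\<bar> + \<bar>real_cond_exp P Fm (\<lambda>x. s0 x - e0 x) x\<bar>"
      using h by linarith
    then show "ennreal (max 0 (real_cond_exp P Fm e1 x - e0 x))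
      \<le> ennreal \<bar>real_cond_exp P Fm (\<lambda>x. e1 x - s1 x) x\<bar> + ennreal \<bar>real_cond_exp P Fm (\<lambda>x. s0 x - e0 x) x\<bar>"
      by (simp add: ennreal_plus[symmetric] del: ennreal_plus)
  qed
  have L: "\<And>g. g \<in> borel_measurable P \<Longrightarrow>
      (\<integral>\<^sup>+ x. ennreal \<bar>real_cond_exp P Fm g x\<bar> \<partial>P) \<le> (\<integral>\<^sup>+ x. ennreal \<bar>g x\<bar> \<partial>P)"
  proof -
    fix g :: "_ \<Rightarrow> real" assume [measurable]: "g \<in> borel_measurable P"
    have "(\<integral>\<^sup>+ x. ennreal \<bar>real_cond_exp P Fm g x\<bar> \<partial>P) \<le> (\<integral>\<^sup>+ x. nn_cond_exp P Fm (\<lambda>x. ennreal \<bar>g x\<bar>) x \<partial>P)"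
      by (rule nn_integral_mono_AE) (rule Fm.real_cond_exp_abs, simp)
    also have "\<dots> = (\<integral>\<^sup>+ x. 1 * nn_cond_exp P Fm (\<lambda>x. ennreal \<bar>g x\<bar>) x \<partial>P)" by simp
    also have "\<dots> = (\<integral>\<^sup>+ x. 1 * ennreal \<bar>g x\<bar> \<partial>P)"
      by (rule Fm.nn_cond_exp_intg) auto
    finally show "(\<integral>\<^sup>+ x. ennreal \<bar>real_cond_exp P Fm g x\<bar> \<partial>P) \<le> (\<integral>\<^sup>+ x. ennreal \<bar>g x\<bar> \<partial>P)" by simp
  qed
  have "(\<integral>\<^sup>+ x. ennreal (max 0 (real_cond_exp P Fm e1 x - e0 x)) \<partial>P)
     \<le> (\<integral>\<^sup>+ x. ennreal \<bar>real_cond_exp P Fm (\<lambda>x. e1 x - s1 x) x\<bar> + ennreal \<bar>real_cond_exp P Fm (\<lambda>x. s0 x - e0 x) x\<bar> \<partial>P)"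
    by (rule nn_integral_mono_AE[OF AE])
  also have "\<dots> = (\<integral>\<^sup>+ x. ennreal \<bar>real_cond_exp P Fm (\<lambda>x. e1 x - s1 x) x\<bar> \<partial>P) + (\<integral>\<^sup>+ x. ennreal \<bar>real_cond_exp P Fm (\<lambda>x. s0 x - e0 x) x\<bar> \<partial>P)"
    by (rule nn_integral_add) auto
  also have "\<dots> \<le> (\<integral>\<^sup>+ x. ennreal \<bar>e1 x - s1 x\<bar> \<partial>P) + (\<integral>\<^sup>+ x. ennreal \<bar>s0 x - e0 x\<bar> \<partial>P)"
    by (intro add_mono L) auto
  also have "(\<integral>\<^sup>+ x. ennreal \<bar>s0 x - e0 x\<bar> \<partial>P) = (\<integral>\<^sup>+ x. ennreal \<bar>e0 x - s0 x\<bar> \<partial>P)"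
    by (simp add: abs_minus_commute)
  finally show ?thesis .
qed


theorem mainTheorem6:
  fixes M :: "'a measure" and Ps :: "'a measure set"
    and F :: "nat \<Rightarrow> nat \<Rightarrow> 'a measure" and E :: "nat \<Rightarrow> nat \<Rightarrow> 'a \<Rightarrow> real"
  assumes "prob_family M Ps"
    and "filtration_array M F"
    and "adapted_array F E"
    and "\<And>m n x. x \<in> space M \<Longrightarrow> E m n x \<ge> 0"
    and "asymptotic_supermartingale M Ps F E"
  shows "ASP Ps F E"
proof -
  obtain S where Ssup: "supermartingale Ps (F_infty M F) S" and SL: "L1_unif_conv Ps E S"
    using assms(5) unfolding asymptotic_supermartingale_def by blast
  have PF: "\<And>P. P \<in> Ps \<Longrightarrow> prob_space P \<and> sets P = sets M"
    using assms(1) unfolding prob_family_def by blast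
  have FA: "\<And>m n. subalgebra M (F m n)" "\<And>m n. sets (F m n) \<subseteq> sets (F m (Suc n))"
    using assms(2) unfolding filtration_array_def by auto
  have int: "\<And>P m n. P \<in> Ps \<Longrightarrow> integrable P (E m n) \<and> integrable P (S n)"
    using SL unfolding L1_unif_conv_def by blast
  have lim: "\<And>n. (\<lambda>m. SUP P\<in>Ps. \<integral>\<^sup>+ x. ennreal \<bar>E m n x - S n x\<bar> \<partial>P) \<longlonglongrightarrow> 0"
    using SL unfolding L1_unif_conv_def by blast
  have sm: "\<And>P n. P \<in> Ps \<Longrightarrow> AE x in P. real_cond_exp P (F_infty M F n) (S (Suc n)) x \<le> S n x"
    using Ssup unfolding supermartingale_def by blast
  have subU: "(\<Union>m. sets (F m n)) \<subseteq> sets M" for n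
    using FA(1) unfolding subalgebra_def by auto
  have subU': "(\<Union>m. sets (F m n)) \<subseteq> Pow (space M)" for n
    using subU sets.sets_into_space by blast
  have setsFi: "sets (F_infty M F n) = sigma_sets (space M) (\<Union>m. sets (F m n))" for n
    unfolding F_infty_def using subU'[of n] by (simp add: sets_measure_of)
  have spFi: "space (F_infty M F n) = space M" for n
    unfolding F_infty_def by (simp add: space_measure_of_conv)
  have bound: "exp_delta_pos P F E m n
      \<le> (\<integral>\<^sup>+ x. ennreal \<bar>E m (Suc n) x - S (Suc n) x\<bar> \<partial>P) + (\<integral>\<^sup>+ x. ennreal \<bar>E m n x - S n x\<bar> \<partial>P)"
    if P: "P \<in> Ps" for P m n
  proof -
    have pP: "prob_space P" and sP: "sets P = sets M" using PF[OF P] by auto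
    have spP: "space P = space M" using sets_eq_imp_space_eq[OF sP] .
    have s1: "subalgebra P (F m n)" using FA(1)[of m n] sP spP unfolding subalgebra_def by auto
    have s2: "subalgebra P (F_infty M F n)"
      unfolding subalgebra_def using sP spP spFi setsFi
      by (metis sets.sigma_sets_subset subU)
    have FG: "sets (F m n) \<subseteq> sets (F_infty M F n)"
      unfolding setsFi by (auto intro: sigma_sets.Basic)
    have me: "E m n \<in> borel_measurable (F m n)" using assms(3) unfolding adapted_array_def by blast
    show ?thesis
    proof -
      have "integrable P (E m (Suc n))" using int[OF P] by blast
      then have "exp_delta_pos P F E m n = (\<integral>\<^sup>+ x. ennreal (max 0 (real_cond_exp P (F m n) (E m (Suc n)) x - E m n x)) \<partial>P)"
        unfolding exp_delta_pos_def by (simp only: if_True)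
      also have "\<dots> \<le> (\<integral>\<^sup>+ x. ennreal \<bar>E m (Suc n) x - S (Suc n) x\<bar> \<partial>P) + (\<integral>\<^sup>+ x. ennreal \<bar>E m n x - S n x\<bar> \<partial>P)"
        using int[OF P] by (intro key_bound[OF pP s1 s2 FG _ _ _ _ me sm[OF P]]) auto
      finally show ?thesis .
    qed
  qed
  show ?thesis unfolding ASP_def
  proof
    fix n
    let ?a = "\<lambda>m. SUP P\<in>Ps. \<integral>\<^sup>+ x. ennreal \<bar>E m (Suc n) x - S (Suc n) x\<bar> \<partial>P"
    let ?b = "\<lambda>m. SUP P\<in>Ps. \<integral>\<^sup>+ x. ennreal \<bar>E m n x - S n x\<bar> \<partial>P"
    have ab: "(\<lambda>m. ?a m + ?b m) \<longlonglongrightarrow> 0 + 0"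
      by (intro tendsto_add lim)
    show "(\<lambda>m. SUP P\<in>Ps. exp_delta_pos P F E m n) \<longlonglongrightarrow> 0"
    proof (rule tendsto_sandwich[OF _ _ tendsto_const])
      show "(\<lambda>m. ?a m + ?b m) \<longlonglongrightarrow> 0" using ab by simp
      show "\<forall>\<^sub>F m in sequentially. 0 \<le> (SUP P\<in>Ps. exp_delta_pos P F E m n)" by simp
      show "\<forall>\<^sub>F m in sequentially. (SUP P\<in>Ps. exp_delta_pos P F E m n) \<le> ?a m + ?b m"
      proof (rule always_eventually, rule allI, rule SUP_least)
        fix m P assume P: "P \<in> Ps"
        show "exp_delta_pos P F E m n \<le> ?a m + ?b m"
          by (rule order_trans[OF bound[OF P]]) (intro add_mono SUP_upper P)
      qed
    qed
  qed
qed

end
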